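(* In $k(Z)$ one has $k(Z)^g=k(b_2,b_3,a_2,a_3)$. More precisely, $a_j^2-b_j^3\neq 0$ for $j=2,3$ and $$u_1=x_1^2=\frac{a_2^2-b_2}{a_2^2-b_2^3}=\frac{a_3^2-b_3}{a_3^2-b_3^3}.$$
   Context: $k$ is a field of characteristic $\neq 2$ containing a primitive fourth root of unity $\sqrt{-1}$. $k(Z)=k(x_1,x_2,x_3,y_1,y_2,y_3)$ where $x_1,x_2,x_3$ are algebraically independent over $k$ and $y_i^2=x_i(x_i^2-1)$. $g$ is the automorphism of $k(Z)$ with $g^*x_i=-x_i$, $g^*y_i=\sqrt{-1}\,y_i$, and $k(Z)^g$ is its fixed field. Set $b_j=x_j/x_1$, $a_j=y_j/y_1$ ($j=2,3$). *)

theory Defs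
  imports "HOL-Computational_Algebra.Polynomial"
begin

definition is_subfield :: "'a::field set \<Rightarrow> bool" where
  "is_subfield F \<longleftrightarrow> 0 \<in> F \<and> 1 \<in> F \<and>
     (\<forall>a\<in>F. \<forall>b\<in>F. a + b \<in> F \<and> a * b \<in> F) \<and>
     (\<forall>a\<in>F. - a \<in> F \<and> inverse a \<in> F)"

definition gen_field :: "'a::field set \<Rightarrow> 'a set" where
  "gen_field S = \<Inter>{F. is_subfield F \<and> S \<subseteq> F}"

text \<open>Evaluation of a trivariate polynomial (encoded as a nested univariate polynomial)
  at the point (t1, t2, t3).\<close>

definition eval3 :: "'a::comm_ring_1 poly poly poly \<Rightarrow> 'a \<Rightarrow> 'a \<Rightarrow> 'a \<Rightarrow> 'a" where
  "eval3 p t1 t2 t3 =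
     poly (map_poly (\<lambda>q. poly (map_poly (\<lambda>r. poly r t1) q) t2) p) t3"

definition alg_indep3 :: "'a::field set \<Rightarrow> 'a \<Rightarrow> 'a \<Rightarrow> 'a \<Rightarrow> bool" where
  "alg_indep3 k t1 t2 t3 \<longleftrightarrow>
     (\<forall>p :: 'a poly poly poly.
        (\<forall>i j l. coeff (coeff (coeff p i) j) l \<in> k) \<and> eval3 p t1 t2 t3 = 0 \<longrightarrow> p = 0)"

end

theory Submission
  imports Defs
begin

lemma sf_0: "is_subfield F \<Longrightarrow> 0 \<in> F" by (simp add: is_subfield_def)
lemma sf_1: "is_subfield F \<Longrightarrow> 1 \<in> F" by (simp add: is_subfield_def)
lemma sf_add: "is_subfield F \<Longrightarrow> a \<in> F \<Longrightarrow> b \<in> F \<Longrightarrow> a + b \<in> F" by (simp add: is_subfield_def)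
lemma sf_mult: "is_subfield F \<Longrightarrow> a \<in> F \<Longrightarrow> b \<in> F \<Longrightarrow> a * b \<in> F" by (simp add: is_subfield_def)
lemma sf_uminus: "is_subfield F \<Longrightarrow> a \<in> F \<Longrightarrow> - a \<in> F" by (simp add: is_subfield_def)
lemma sf_inverse: "is_subfield F \<Longrightarrow> a \<in> F \<Longrightarrow> inverse a \<in> F" by (simp add: is_subfield_def)
lemma sf_diff: "is_subfield F \<Longrightarrow> a \<in> F \<Longrightarrow> b \<in> F \<Longrightarrow> a - b \<in> F"
  by (metis diff_conv_add_uminus sf_add sf_uminus)
lemma sf_divide: "is_subfield F \<Longrightarrow> a \<in> F \<Longrightarrow> b \<in> F \<Longrightarrow> a / b \<in> F"
  by (metis divide_inverse sf_mult sf_inverse)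
lemma sf_power: "is_subfield F \<Longrightarrow> a \<in> F \<Longrightarrow> a ^ n \<in> F"
  by (induction n) (auto intro: sf_1 sf_mult)

lemmas sf_intros = sf_0 sf_1 sf_add sf_mult sf_uminus sf_inverse sf_diff sf_divide sf_power

lemma gen_field_subfield: "is_subfield (gen_field S)"
  unfolding gen_field_def is_subfield_def by auto
lemma gen_field_sup: "S \<subseteq> gen_field S"
  unfolding gen_field_def by auto
lemma gen_field_min: "is_subfield F \<Longrightarrow> S \<subseteq> F \<Longrightarrow> gen_field S \<subseteq> F"
  unfolding gen_field_def by auto

lemma hom_facts:
  fixes g :: "'a::field \<Rightarrow> 'a"
  assumes g_add: "\<And>a b. g (a + b) = g a + g b"
    and g_mult: "\<And>a b. g (a * b) = g a * g b"
    and inj: "inj g"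
  shows "g 0 = 0" "g 1 = 1" "g (- a) = - g a" "g (inverse a) = inverse (g a)"
    "g (a - b) = g a - g b" "g (a / b) = g a / g b" "g (a ^ n) = g a ^ n"
proof -
  show g0: "g 0 = 0" using g_add[of 0 0] by (metis add.right_neutral add_left_cancel)
  have "g 1 \<noteq> 0" using inj g0 by (metis injD one_neq_zero)
  then show g1: "g 1 = 1" using g_mult[of 1 1] by simp
  show gm: "g (- a) = - g a" for a using g_add[of a "-a"] g0 by (simp add: eq_neg_iff_add_eq_0 add.commute)
  show gi: "g (inverse a) = inverse (g a)" for a
  proof (cases "a = 0")
    case True then show ?thesis using g0 by simp
  next
    case False
    then have "g a * g (inverse a) = 1" using g_mult[of a "inverse a"] g1 by simp
    then show ?thesis by (metis inverse_unique)
  qed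
  show "g (a - b) = g a - g b" using g_add[of a "-b"] gm by simp
  show "g (a / b) = g a / g b" using g_mult gi by (simp add: divide_inverse)
  show "g (a ^ n) = g a ^ n" by (induction n) (simp_all add: g1 g_mult)
qed

lemma fixed_subfield:
  fixes g :: "'a::field \<Rightarrow> 'a"
  assumes g_add: "\<And>a b. g (a + b) = g a + g b"
    and g_mult: "\<And>a b. g (a * b) = g a * g b"
    and inj: "inj g"
  shows "is_subfield {z. g z = z}"
  using hom_facts[OF assms] unfolding is_subfield_def by (auto simp: g_add g_mult)

lemma formula:
  fixes x1 x y1 y :: "'a::field"
  assumes "x1 \<noteq> 0" "x1^2 \<noteq> 1" "x \<noteq> 0" "x^2 \<noteq> x1^2"
    and c1: "y1^2 = x1 * (x1^2 - 1)" and c: "y^2 = x * (x^2 - 1)"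
  shows "(y/y1)^2 - (x/x1)^3 \<noteq> 0"
    "x1^2 = ((y/y1)^2 - x/x1) / ((y/y1)^2 - (x/x1)^3)"
proof -
  have y1: "y1 \<noteq> 0" using c1 assms(1,2) by auto
  have x1m: "x1^2 - 1 \<noteq> 0" "x^2 - x1^2 \<noteq> 0" using assms by auto
  have ya: "(y/y1)^2 = x*(x^2-1)/(x1*(x1^2-1))" by (simp add: power_divide c c1)
  have e1: "(y/y1)^2 - (x/x1)^3 = x * (x^2 - x1^2) / (x1^3 * (x1^2 - 1))"
    unfolding ya using assms x1m by (simp add: divide_simps) (simp add: algebra_simps power2_eq_square power3_eq_cube)
  have e2: "(y/y1)^2 - x/x1 = x * (x^2 - x1^2) / (x1 * (x1^2 - 1))"
    unfolding ya using assms x1m by (simp add: divide_simps) (simp add: algebra_simps power2_eq_square power3_eq_cube)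
  have nz: "x * (x^2 - x1^2) / (x1^3 * (x1^2 - 1)) \<noteq> 0" using assms by auto
  show "(y/y1)^2 - (x/x1)^3 \<noteq> 0" using e1 nz by simp
  show "x1^2 = ((y/y1)^2 - x/x1) / ((y/y1)^2 - (x/x1)^3)"
  proof -
    have A: "x * (x^2 - x1^2) \<noteq> 0" using assms by auto
    show ?thesis unfolding e1 e2 using A x1m assms(1)
      by (simp add: divide_simps) (simp add: power2_eq_square power3_eq_cube algebra_simps)
  qed
qed

lemma prod_rep:
  fixes y :: "'a::comm_ring_1"
  assumes "y^4 = m"
  shows "(c0 + c1*y + c2*y^2 + c3*y^3) * (d0 + d1*y + d2*y^2 + d3*y^3) =
    (c0*d0 + m*(c1*d3+c2*d2+c3*d1)) + (c0*d1+c1*d0 + m*(c2*d3+c3*d2))*y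
    + (c0*d2+c1*d1+c2*d0 + m*(c3*d3))*y^2 + (c0*d3+c1*d2+c2*d1+c3*d0)*y^3"
proof -
  have "(c0 + c1*y + c2*y^2 + c3*y^3) * (d0 + d1*y + d2*y^2 + d3*y^3) =
    (c0*d0 + y^4*(c1*d3+c2*d2+c3*d1)) + (c0*d1+c1*d0 + y^4*(c2*d3+c3*d2))*y
    + (c0*d2+c1*d1+c2*d0 + y^4*(c3*d3))*y^2 + (c0*d3+c1*d2+c2*d1+c3*d0)*y^3"
    by (simp add: algebra_simps power2_eq_square power3_eq_cube power4_eq_xxxx)
  then show ?thesis using assms by simp
qed

lemma indep_ne:
  assumes k: "is_subfield k" and ind: "alg_indep3 k x1 x2 x3" and c: "c \<in> k"
  shows "x1 \<noteq> c" "x2 \<noteq> c * x1" "x3 \<noteq> c * x1"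
proof -
  have nc: "-c \<in> k" using k c by (simp add: is_subfield_def)
  have 0: "0 \<in> k" and 1: "1 \<in> k" using k by (auto simp: is_subfield_def)
  show "x1 \<noteq> c"
  proof
    assume h: "x1 = c"
    let ?p = "[:[:[:-c,1:]:]:] :: 'a poly poly poly"
    have "\<forall>i j l. coeff (coeff (coeff ?p i) j) l \<in> k"
      using nc 0 1 by (auto simp: coeff_pCons split: nat.split)
    moreover have "eval3 ?p x1 x2 x3 = 0" using h by (simp add: eval3_def map_poly_pCons)
    ultimately have "?p = 0" using ind unfolding alg_indep3_def by blast
    thus False by simp
  qed
  show "x2 \<noteq> c * x1"
  proof
    assume h: "x2 = c * x1"
    let ?p = "[:[:[:0,-c:], 1:]:] :: 'a poly poly poly"
    have "\<forall>i j l. coeff (coeff (coeff ?p i) j) l \<in> k"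
      using nc 0 1 by (auto simp: coeff_pCons split: nat.split)
    moreover have "eval3 ?p x1 x2 x3 = 0" using h by (simp add: eval3_def map_poly_pCons)
    ultimately have "?p = 0" using ind unfolding alg_indep3_def by blast
    thus False by simp
  qed
  show "x3 \<noteq> c * x1"
  proof
    assume h: "x3 = c * x1"
    let ?p = "[:[:[:0,-c:]:], 1:] :: 'a poly poly poly"
    have "\<forall>i j l. coeff (coeff (coeff ?p i) j) l \<in> k"
      using nc 0 1 by (auto simp: coeff_pCons split: nat.split)
    moreover have "eval3 ?p x1 x2 x3 = 0" using h by (simp add: eval3_def map_poly_pCons)
    ultimately have "?p = 0" using ind unfolding alg_indep3_def by blast
    thus False by simp
  qed
qed

theorem mainTheorem5:
  fixes k :: "'a::field set"
    and i x1 x2 x3 y1 y2 y3 :: 'a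
    and g :: "'a \<Rightarrow> 'a"
  assumes k_subfield: "is_subfield k"
    and char_not_2: "(2::'a) \<noteq> 0"
    and i_in_k: "i \<in> k" and i_sq: "i ^ 2 = -1"
    and indep: "alg_indep3 k x1 x2 x3"
    and curve1: "y1 ^ 2 = x1 * (x1 ^ 2 - 1)"
    and curve2: "y2 ^ 2 = x2 * (x2 ^ 2 - 1)"
    and curve3: "y3 ^ 2 = x3 * (x3 ^ 2 - 1)"
    and generated: "gen_field (k \<union> {x1, x2, x3, y1, y2, y3}) = UNIV"
    and g_add: "\<And>a b. g (a + b) = g a + g b"
    and g_mult: "\<And>a b. g (a * b) = g a * g b"
    and g_bij: "bij g"
    and g_k: "\<And>c. c \<in> k \<Longrightarrow> g c = c"
    and g_x1: "g x1 = - x1" and g_x2: "g x2 = - x2" and g_x3: "g x3 = - x3"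
    and g_y1: "g y1 = i * y1" and g_y2: "g y2 = i * y2" and g_y3: "g y3 = i * y3"
  shows "let b2 = x2 / x1; b3 = x3 / x1; a2 = y2 / y1; a3 = y3 / y1 in
           {z. g z = z} = gen_field (k \<union> {b2, b3, a2, a3}) \<and>
           a2 ^ 2 - b2 ^ 3 \<noteq> 0 \<and> a3 ^ 2 - b3 ^ 3 \<noteq> 0 \<and>
           x1 ^ 2 = (a2 ^ 2 - b2) / (a2 ^ 2 - b2 ^ 3) \<and>
           x1 ^ 2 = (a3 ^ 2 - b3) / (a3 ^ 2 - b3 ^ 3)"
  proof -
  define b2 where "b2 = x2 / x1"
  define b3 where "b3 = x3 / x1"
  define a2 where "a2 = y2 / y1"
  define a3 where "a3 = y3 / y1"
  define L where "L = gen_field (k \<union> {b2, b3, a2, a3})"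
  have inj: "inj g" using g_bij bij_is_inj by blast
  note hf = hom_facts[OF g_add g_mult inj]
  have m1: "-1 \<in> k" "1 \<in> k" using k_subfield by (auto intro: sf_intros)
  have x1n: "x1 \<noteq> 0" "x1 \<noteq> 1" "x1 \<noteq> -1"
    using indep_ne(1)[OF k_subfield indep] k_subfield m1 by (auto intro: sf_intros)
  have x2n: "x2 \<noteq> 0" "x2 \<noteq> x1" "x2 \<noteq> -x1"
    using indep_ne(2)[OF k_subfield indep] k_subfield m1 sf_0[OF k_subfield]
    by (metis mult_1 mult_minus1 mult_zero_left)+
  have x3n: "x3 \<noteq> 0" "x3 \<noteq> x1" "x3 \<noteq> -x1"
    using indep_ne(3)[OF k_subfield indep] k_subfield m1 sf_0[OF k_subfield]
    by (metis mult_1 mult_minus1 mult_zero_left)+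
  have sq1: "x1^2 \<noteq> 1" using x1n by (simp add: power2_eq_1_iff)
  have sq2: "x2^2 \<noteq> x1^2" using x2n by (simp add: power2_eq_iff)
  have sq3: "x3^2 \<noteq> x1^2" using x3n by (simp add: power2_eq_iff)
  have y1n: "y1 \<noteq> 0" using curve1 x1n sq1 by auto
  note f2 = formula[OF x1n(1) sq1 x2n(1) sq2 curve1 curve2, folded a2_def b2_def]
  note f3 = formula[OF x1n(1) sq1 x3n(1) sq3 curve1 curve3, folded a3_def b3_def]
  have Lsf: "is_subfield L" unfolding L_def by (rule gen_field_subfield)
  have kL: "k \<subseteq> L" and gL: "b2 \<in> L" "b3 \<in> L" "a2 \<in> L" "a3 \<in> L"
    using gen_field_sup[of "k \<union> {b2, b3, a2, a3}"] unfolding L_def by auto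
  have iL: "i \<in> L" using kL i_in_k by auto
  have Lfix: "L \<subseteq> {z. g z = z}" unfolding L_def
  proof (rule gen_field_min[OF fixed_subfield[OF g_add g_mult inj]])
    show "k \<union> {b2, b3, a2, a3} \<subseteq> {z. g z = z}"
      using g_k y1n i_sq by (auto simp: b2_def b3_def a2_def a3_def hf g_x1 g_x2 g_x3 g_y1 g_y2 g_y3)
  qed
  have gLc: "g c = c" if "c \<in> L" for c using Lfix that by auto
  define u where "u = x1^2"
  have uL: "u \<in> L" unfolding u_def f2(2) using Lsf gL by (auto intro!: sf_intros)
  have u1: "u - 1 \<noteq> 0" using sq1 u_def by auto
  define m where "m = u * (u - 1)^2"
  have mL: "m \<in> L" unfolding m_def using Lsf uL by (auto intro!: sf_intros)
  have y4: "y1^4 = m"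
  proof -
    have "y1^4 = (y1^2)^2" by simp
    also have "\<dots> = x1^2 * (x1^2 - 1)^2" unfolding curve1 by (simp add: power_mult_distrib)
    finally show ?thesis unfolding m_def u_def .
  qed
  define S where "S = {z. \<exists>c0 c1 c2 c3. c0 \<in> L \<and> c1 \<in> L \<and> c2 \<in> L \<and> c3 \<in> L \<and>
                           z = c0 + c1*y1 + c2*y1^2 + c3*y1^3}"
  have inS: "c0 + c1*y1 + c2*y1^2 + c3*y1^3 \<in> S" if "c0 \<in> L" "c1 \<in> L" "c2 \<in> L" "c3 \<in> L"
    for c0 c1 c2 c3 using that unfolding S_def by blast
  have LS: "L \<subseteq> S"
  proof
    fix c assume "c \<in> L"
    then have "c + 0*y1 + 0*y1^2 + 0*y1^3 \<in> S" using Lsf by (intro inS) (auto intro: sf_intros)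
    then show "c \<in> S" by simp
  qed
  have gS: "g (c0 + c1*y1 + c2*y1^2 + c3*y1^3) = c0 + (i*c1)*y1 + (-c2)*y1^2 + (-(i*c3))*y1^3"
    if "c0 \<in> L" "c1 \<in> L" "c2 \<in> L" "c3 \<in> L" for c0 c1 c2 c3
  proof -
    have i3: "i^3 = -i" using i_sq by (metis power3_eq_cube power2_eq_square mult_minus_left mult_1)
    have "g (c0 + c1*y1 + c2*y1^2 + c3*y1^3) = c0 + c1*(i*y1) + c2*(i*y1)^2 + c3*(i*y1)^3"
      using that by (simp add: g_add g_mult hf gLc g_y1)
    also have "\<dots> = c0 + (i*c1)*y1 + (-c2)*y1^2 + (-(i*c3))*y1^3"
      by (simp add: power_mult_distrib i_sq i3)
    finally show ?thesis .
  qed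
  have gSS: "z \<in> S \<Longrightarrow> g z \<in> S" for z
  proof -
    assume "z \<in> S"
    then obtain c0 c1 c2 c3 where c: "c0 \<in> L" "c1 \<in> L" "c2 \<in> L" "c3 \<in> L"
      and z: "z = c0 + c1*y1 + c2*y1^2 + c3*y1^3" unfolding S_def by blast
    show "g z \<in> S" unfolding z gS[OF c] using c iL Lsf by (intro inS) (auto intro: sf_intros)
  qed
  have g4: "z \<in> S \<Longrightarrow> g (g (g (g z))) = z" for z
  proof -
    assume "z \<in> S"
    then obtain c0 c1 c2 c3 where c: "c0 \<in> L" "c1 \<in> L" "c2 \<in> L" "c3 \<in> L"
      and z: "z = c0 + c1*y1 + c2*y1^2 + c3*y1^3" unfolding S_def by blast
    have cc: "i*c1 \<in> L" "-c2 \<in> L" "-(i*c3) \<in> L" "i*(i*c1) \<in> L" "- (-c2) \<in> L" "-(i*(-(i*c3))) \<in> L"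
      "i*(i*(i*c1)) \<in> L" "- (- (-c2)) \<in> L" "-(i*(-(i*(-(i*c3))))) \<in> L"
      using c iL Lsf by (auto intro!: sf_intros)
    have "g (g (g (g z))) = c0 + (i*(i*(i*(i*c1))))*y1 + (-(- (- (-c2))))*y1^2
         + (-(i*(-(i*(-(i*(-(i*c3))))))))*y1^3"
      unfolding z by (simp only: gS c cc)
    also have "\<dots> = z" unfolding z using i_sq by algebra
    finally show ?thesis .
  qed
  have avg: "z \<in> L" if zS: "z \<in> S" and fz: "g z = z" for z
  proof -
    obtain c0 c1 c2 c3 where c: "c0 \<in> L" "c1 \<in> L" "c2 \<in> L" "c3 \<in> L"
      and z: "z = c0 + c1*y1 + c2*y1^2 + c3*y1^3" using zS unfolding S_def by blast
    have cc: "i*c1 \<in> L" "-c2 \<in> L" "-(i*c3) \<in> L" "i*(i*c1) \<in> L" "- (-c2) \<in> L" "-(i*(-(i*c3))) \<in> L"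
      using c iL Lsf by (auto intro!: sf_intros)
    have e1: "z = c0 + (i*c1)*y1 + (-c2)*y1^2 + (-(i*c3))*y1^3"
      using fz gS[OF c] z by simp
    have e2: "z = c0 + (i*(i*c1))*y1 + (- (-c2))*y1^2 + (-(i*(-(i*c3))))*y1^3"
      using gS[OF c(1) cc(1-3)] e1 fz by metis
    have e3: "z = c0 + (i*(i*(i*c1)))*y1 + (- (- (-c2)))*y1^2 + (-(i*(-(i*(-(i*c3))))))*y1^3"
      using gS[OF c(1) cc(4-6)] e2 fz by metis
    have s1: "z + z + z + z = (c0 + c1*y1 + c2*y1^2 + c3*y1^3) + (c0 + (i*c1)*y1 + (-c2)*y1^2 + (-(i*c3))*y1^3)
      + (c0 + (i*(i*c1))*y1 + (- (-c2))*y1^2 + (-(i*(-(i*c3))))*y1^3)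
      + (c0 + (i*(i*(i*c1)))*y1 + (- (- (-c2)))*y1^2 + (-(i*(-(i*(-(i*c3))))))*y1^3)"
      by (simp only: z[symmetric] e1[symmetric] e2[symmetric] e3[symmetric])
    have s2: "(c0 + c1*y1 + c2*y1^2 + c3*y1^3) + (c0 + (i*c1)*y1 + (-c2)*y1^2 + (-(i*c3))*y1^3)
      + (c0 + (i*(i*c1))*y1 + (- (-c2))*y1^2 + (-(i*(-(i*c3))))*y1^3)
      + (c0 + (i*(i*(i*c1)))*y1 + (- (- (-c2)))*y1^2 + (-(i*(-(i*(-(i*c3))))))*y1^3) = 4 * c0"
      using i_sq by algebra
    have "4 * z = 4 * c0" using s1 s2 by simp
    moreover have "(4::'a) \<noteq> 0" using char_not_2
      by (metis mult_2 mult_eq_0_iff numeral_Bit0 one_add_one)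
    ultimately have "z = c0" by simp
    then show ?thesis using c by simp
  qed
  have Ssf: "is_subfield S"
    unfolding is_subfield_def
  proof (intro conjI ballI)
    show "0 \<in> S" "1 \<in> S" using LS Lsf by (auto intro: sf_intros)
  next
    fix a b assume "a \<in> S" "b \<in> S"
    then obtain c0 c1 c2 c3 d0 d1 d2 d3 where c: "c0 \<in> L" "c1 \<in> L" "c2 \<in> L" "c3 \<in> L"
      and a: "a = c0 + c1*y1 + c2*y1^2 + c3*y1^3"
      and d: "d0 \<in> L" "d1 \<in> L" "d2 \<in> L" "d3 \<in> L"
      and b: "b = d0 + d1*y1 + d2*y1^2 + d3*y1^3" unfolding S_def by blast
    have "a + b = (c0+d0) + (c1+d1)*y1 + (c2+d2)*y1^2 + (c3+d3)*y1^3"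
      unfolding a b by (simp add: algebra_simps)
    then show "a + b \<in> S" by (simp only:) (rule inS; use c d Lsf in \<open>auto intro: sf_intros\<close>)
    show "a * b \<in> S" unfolding a b prod_rep[OF y4] using c d mL Lsf by (intro inS; auto intro!: sf_intros)
  next
    fix a assume aS: "a \<in> S"
    then obtain c0 c1 c2 c3 where c: "c0 \<in> L" "c1 \<in> L" "c2 \<in> L" "c3 \<in> L"
      and a: "a = c0 + c1*y1 + c2*y1^2 + c3*y1^3" unfolding S_def by blast
    have "- a = (-c0) + (-c1)*y1 + (-c2)*y1^2 + (-c3)*y1^3"
      unfolding a by (simp add: algebra_simps)
    then show "- a \<in> S" by (simp only:) (rule inS; use c Lsf in \<open>auto intro: sf_intros\<close>)
    have mS: "p \<in> S \<Longrightarrow> q \<in> S \<Longrightarrow> p * q \<in> S" for p q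
    proof -
      assume "p \<in> S" "q \<in> S"
      then obtain c0 c1 c2 c3 d0 d1 d2 d3 where c: "c0 \<in> L" "c1 \<in> L" "c2 \<in> L" "c3 \<in> L"
        and a: "p = c0 + c1*y1 + c2*y1^2 + c3*y1^3"
        and d: "d0 \<in> L" "d1 \<in> L" "d2 \<in> L" "d3 \<in> L"
        and b: "q = d0 + d1*y1 + d2*y1^2 + d3*y1^3" unfolding S_def by blast
      show "p * q \<in> S" unfolding a b prod_rep[OF y4] using c d mL Lsf by (intro inS; auto intro!: sf_intros)
    qed
    show "inverse a \<in> S"
    proof (cases "a = 0")
      case True then show ?thesis using LS Lsf by (auto intro: sf_intros)
    next
      case False
      define w1 where "w1 = g a"
      define w2 where "w2 = g w1"
      define w3 where "w3 = g w2"
      have wS: "w1 \<in> S" "w2 \<in> S" "w3 \<in> S" using aS gSS unfolding w1_def w2_def w3_def by blast+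
      define N where "N = a * (w1 * w2 * w3)"
      have NS: "N \<in> S" unfolding N_def using aS wS mS by blast
      have gw3: "g w3 = a" unfolding w3_def w2_def w1_def using g4[OF aS] .
      have "g N = N" unfolding N_def using gw3 by (simp add: g_mult w1_def[symmetric] w2_def[symmetric] w3_def[symmetric] mult_ac)
      then have NL: "N \<in> L" using avg NS by blast
      have gnz: "z \<noteq> 0 \<Longrightarrow> g z \<noteq> 0" for z using inj hf(1) by (metis injD)
      have wn: "w1 \<noteq> 0" "w2 \<noteq> 0" "w3 \<noteq> 0" using False gnz unfolding w1_def w2_def w3_def by blast+
      then have Nn: "N \<noteq> 0" using False unfolding N_def by simp
      have "inverse a = (w1 * w2 * w3) * inverse N" unfolding N_def using False Nn wn
        by (simp add: field_simps)
      moreover have "inverse N \<in> S" using NL Lsf LS by (auto intro: sf_intros)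
      ultimately show ?thesis using wS mS by metis
    qed
  qed
  have gensS: "k \<union> {x1, x2, x3, y1, y2, y3} \<subseteq> S"
  proof -
    define v where "v = inverse (u - 1)"
    have vL: "v \<in> L" unfolding v_def using uL Lsf by (auto intro: sf_intros)
    have x1e: "x1 = v * y1^2" unfolding v_def curve1 u_def using u1 u_def by (simp add: field_simps)
    have "x1 = 0 + 0*y1 + v*y1^2 + 0*y1^3" using x1e by simp
    then have "x1 \<in> S" using vL Lsf by (metis inS sf_0)
    moreover have "x2 = 0 + 0*y1 + (b2*v)*y1^2 + 0*y1^3" using x1e x1n unfolding b2_def by (simp add: field_simps)
    then have "x2 \<in> S" using vL gL Lsf by (metis inS sf_0 sf_mult)
    moreover have "x3 = 0 + 0*y1 + (b3*v)*y1^2 + 0*y1^3" using x1e x1n unfolding b3_def by (simp add: field_simps)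
    then have "x3 \<in> S" using vL gL Lsf by (metis inS sf_0 sf_mult)
    moreover have "y1 = 0 + 1*y1 + 0*y1^2 + 0*y1^3" by simp
    then have "y1 \<in> S" using Lsf by (metis inS sf_0 sf_1)
    moreover have "y2 = 0 + a2*y1 + 0*y1^2 + 0*y1^3" using y1n unfolding a2_def by simp
    then have "y2 \<in> S" using gL Lsf by (metis inS sf_0)
    moreover have "y3 = 0 + a3*y1 + 0*y1^2 + 0*y1^3" using y1n unfolding a3_def by simp
    then have "y3 \<in> S" using gL Lsf by (metis inS sf_0)
    ultimately show ?thesis using kL LS by blast
  qed
  have SU: "S = UNIV" using gen_field_min[OF Ssf gensS] generated by blast
  have fixL: "{z. g z = z} = L"
    using Lfix avg SU by blast
  show ?thesis unfolding Let_def b2_def[symmetric] b3_def[symmetric] a2_def[symmetric] a3_def[symmetric]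
    using fixL f2 f3 unfolding L_def by simp
qed

end
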